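(* Let $A=(a_{nk})$ be an infinite complex matrix such that $l_A$ contains $\phi$ and $e$. If $l_A$ is deferred Ces\`{a}ro conull, then $A$ is not $l$-replaceable.
   Context: Fix sequences $p=(p(n))$, $q=(q(n))$ of nonnegative integers with $p(n)<q(n)$ for all $n$ and $q(n)\to\infty$. $\delta^j$ denotes the sequence with $1$ in position $j$ and $0$ elsewhere, $\phi$ the linear span of all $\delta^j$, $e=(1,1,1,\dots)$, and $\phi_1$ the span of $\phi$ and $e$. For a matrix $A$, $l_A=\{x : \sum_k a_{nk}x_k \text{ converges for each } n \text{ and } \sum_n|\sum_k a_{nk}x_k|<\infty\}$, an FK-space (complete metrizable locally convex sequence space with continuous coordinates) with its usual topology given by the seminorms $|x_n|$, $\sum_n|\sum_k a_{nk}x_k|$, and $\sup_m|\sum_{k=1}^m a_{nk}x_k|$; $l_A'$ is its continuous dual. $A$ (with $l_A\supseteq\phi$) is called $l$-replaceable if there is a matrix $D=(d_{nk})$ with $l_D=l_A$ and $\sum_n d_{nk}=1$ for every $k$. An FK-space $X\supseteq\phi_1$ is called deferred Ces\`{a}ro conull if for every $f\in X'$, $f(e)=\lim_{n\to\infty}\frac{1}{q(n)-p(n)}\sum_{k=p(n)+1}^{q(n)}\sum_{j=1}^{k}f(\delta^j)$. *)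

theory Defs
  imports "HOL-Analysis.Analysis"
begin

(* Sequences are indexed from 0: coordinate j (0-based) corresponds to the paper's
   coordinate j+1.  Matrices are  nat \<Rightarrow> nat \<Rightarrow> complex, 0-based rows and columns. *)

definition delta :: "nat \<Rightarrow> nat \<Rightarrow> complex" where
  "delta j = (\<lambda>k. if k = j then 1 else 0)"

definition eseq :: "nat \<Rightarrow> complex" where
  "eseq = (\<lambda>_. 1)"

definition lA :: "(nat \<Rightarrow> nat \<Rightarrow> complex) \<Rightarrow> (nat \<Rightarrow> complex) set" where
  "lA A = {x. (\<forall>n. summable (\<lambda>k. A n k * x k)) \<and>
              summable (\<lambda>n. norm (\<Sum>k. A n k * x k))}"

definition lA_seminorms :: "(nat \<Rightarrow> nat \<Rightarrow> complex) \<Rightarrow> ((nat \<Rightarrow> complex) \<Rightarrow> real) set" where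
  "lA_seminorms A =
     range (\<lambda>n x. norm (x n))
     \<union> {\<lambda>x. \<Sum>n. norm (\<Sum>k. A n k * x k)}
     \<union> range (\<lambda>n x. SUP m. norm (\<Sum>k\<le>m. A n k * x k))"

definition lA_top :: "(nat \<Rightarrow> nat \<Rightarrow> complex) \<Rightarrow> (nat \<Rightarrow> complex) topology" where
  "lA_top A = subtopology
     (topology_generated_by
        {{x \<in> lA A. p (\<lambda>k. x k - y k) < r} | p y r. p \<in> lA_seminorms A \<and> y \<in> lA A})
     (lA A)"

definition lA_dual :: "(nat \<Rightarrow> nat \<Rightarrow> complex) \<Rightarrow> ((nat \<Rightarrow> complex) \<Rightarrow> complex) set" where
  "lA_dual A = {f. (\<forall>x\<in>lA A. \<forall>y\<in>lA A. f (\<lambda>k. x k + y k) = f x + f y)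
                 \<and> (\<forall>x\<in>lA A. \<forall>c::complex. f (\<lambda>k. c * x k) = c * f x)
                 \<and> continuous_map (lA_top A) euclidean f}"

(* l_A deferred Cesaro conull (p,q fixed); paper: for every f in l_A',
   f(e) = lim_n 1/(q n - p n) \<Sum>_{k=p n+1}^{q n} \<Sum>_{j=1}^{k} f(\<delta>^j).
   With 0-based coordinates, \<Sum>_{j=1}^{k} f(\<delta>^j) = \<Sum>_{j<k} f(delta j). *)
definition deferred_cesaro_conull ::
  "(nat \<Rightarrow> nat) \<Rightarrow> (nat \<Rightarrow> nat) \<Rightarrow> (nat \<Rightarrow> nat \<Rightarrow> complex) \<Rightarrow> bool" where
  "deferred_cesaro_conull p q A \<longleftrightarrow>
     (\<forall>j. delta j \<in> lA A) \<and> eseq \<in> lA A \<and>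
     (\<forall>f\<in>lA_dual A.
        (\<lambda>n. (1 / of_nat (q n - p n)) *
              (\<Sum>k\<in>{p n + 1..q n}. \<Sum>j<k. f (delta j)))
        \<longlonglongrightarrow> f eseq)"

definition l_replaceable :: "(nat \<Rightarrow> nat \<Rightarrow> complex) \<Rightarrow> bool" where
  "l_replaceable A \<longleftrightarrow>
     (\<forall>j. delta j \<in> lA A) \<and>
     (\<exists>D. lA D = lA A \<and> (\<forall>k. (\<lambda>n. D n k) sums 1))"

end

theory Submission
  imports Defs
begin

definition rowA :: "(nat \<Rightarrow> nat \<Rightarrow> complex) \<Rightarrow> nat \<Rightarrow> (nat \<Rightarrow> complex) \<Rightarrow> complex" where
  "rowA A n x = (\<Sum>k. A n k * x k)"

definition psA :: "(nat \<Rightarrow> nat \<Rightarrow> complex) \<Rightarrow> nat \<Rightarrow> nat \<Rightarrow> (nat \<Rightarrow> complex) \<Rightarrow> complex" where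
  "psA A n m x = (\<Sum>k\<le>m. A n k * x k)"

definition sn :: "(nat \<Rightarrow> nat \<Rightarrow> complex) \<Rightarrow> nat \<Rightarrow> (nat \<Rightarrow> complex) \<Rightarrow> real" where
  "sn A i x = (if i = 0 then (\<Sum>n. norm (rowA A n x))
     else if odd i then norm (x ((i - 1) div 2))
     else (SUP m. norm (psA A ((i - 2) div 2) m x)))"

lemma lA_iff: "x \<in> lA A \<longleftrightarrow> (\<forall>n. summable (\<lambda>k. A n k * x k)) \<and> summable (\<lambda>n. norm (rowA A n x))"
  by (simp add: lA_def rowA_def)

lemma lA_add:
  assumes "x \<in> lA A" "y \<in> lA A"
  shows "(\<lambda>k. x k + y k) \<in> lA A"
    and "rowA A n (\<lambda>k. x k + y k) = rowA A n x + rowA A n y"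
proof -
  have s: "\<And>n. summable (\<lambda>k. A n k * x k)" "\<And>n. summable (\<lambda>k. A n k * y k)"
    using assms by (auto simp: lA_iff)
  have r: "\<And>n. rowA A n (\<lambda>k. x k + y k) = rowA A n x + rowA A n y"
    unfolding rowA_def using s by (simp add: distrib_left suminf_add)
  then show "rowA A n (\<lambda>k. x k + y k) = rowA A n x + rowA A n y" .
  have "summable (\<lambda>n. norm (rowA A n x) + norm (rowA A n y))"
    using assms by (auto simp: lA_iff intro: summable_add)
  then have "summable (\<lambda>n. norm (rowA A n (\<lambda>k. x k + y k)))"
    by (rule summable_comparison_test') (simp add: r norm_triangle_ineq)
  moreover have "\<And>n. summable (\<lambda>k. A n k * (x k + y k))"
    using s by (simp add: distrib_left summable_add)
  ultimately show "(\<lambda>k. x k + y k) \<in> lA A" unfolding lA_iff by blast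
qed

lemma lA_scale:
  assumes "x \<in> lA A"
  shows "(\<lambda>k. c * x k) \<in> lA A"
    and "rowA A n (\<lambda>k. c * x k) = c * rowA A n x"
proof -
  have s: "\<And>n. summable (\<lambda>k. A n k * x k)"
    using assms by (auto simp: lA_iff)
  have r: "\<And>n. rowA A n (\<lambda>k. c * x k) = c * rowA A n x"
    unfolding rowA_def using s suminf_mult[of _ c] by (simp add: algebra_simps)
  then show "rowA A n (\<lambda>k. c * x k) = c * rowA A n x" .
  have "summable (\<lambda>n. norm c * norm (rowA A n x))"
    using assms by (auto simp: lA_iff intro: summable_mult)
  then have "summable (\<lambda>n. norm (rowA A n (\<lambda>k. c * x k)))"
    by (simp add: r norm_mult)
  moreover have "\<And>n. summable (\<lambda>k. A n k * (c * x k))"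
    using summable_mult[OF s, of c] by (simp add: algebra_simps)
  ultimately show "(\<lambda>k. c * x k) \<in> lA A" unfolding lA_iff by blast
qed

lemma lA_diff:
  assumes "x \<in> lA A" "y \<in> lA A"
  shows "(\<lambda>k. x k - y k) \<in> lA A"
    and "rowA A n (\<lambda>k. x k - y k) = rowA A n x - rowA A n y"
proof -
  have e: "(\<lambda>k. x k + (-1) * y k) = (\<lambda>k. x k - y k)" by simp
  have "(\<lambda>k. (-1) * y k) \<in> lA A" using lA_scale assms by blast
  note a = lA_add[OF assms(1) this]
  show "(\<lambda>k. x k - y k) \<in> lA A" using a(1) unfolding e .
  show "rowA A n (\<lambda>k. x k - y k) = rowA A n x - rowA A n y"
    using a(2)[of n] lA_scale(2)[OF assms(2), where c="-1" and n=n] unfolding e by simp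
qed

lemma lA_zero: "(\<lambda>k. 0) \<in> lA A"
  by (simp add: lA_iff rowA_def)

lemma psA_lim:
  assumes "x \<in> lA A"
  shows "(\<lambda>m. psA A n m x) \<longlonglongrightarrow> rowA A n x"
proof -
  have "summable (\<lambda>k. A n k * x k)" using assms by (auto simp: lA_iff)
  from summable_LIMSEQ'[OF this] show ?thesis unfolding psA_def rowA_def .
qed

lemma psA_bdd:
  assumes "x \<in> lA A"
  shows "bdd_above (range (\<lambda>m. norm (psA A n m x)))"
proof -
  have "Bseq (\<lambda>m. psA A n m x)"
    using psA_lim[OF assms] by (intro convergent_imp_Bseq convergentI)
  then obtain K where "\<forall>m. norm (psA A n m x) \<le> K"
    by (rule BseqE)
  then show ?thesis by (intro bdd_aboveI[where M=K]) auto
qed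

lemma psA_add: "psA A n m (\<lambda>k. x k + y k) = psA A n m x + psA A n m y"
  by (simp add: psA_def distrib_left sum.distrib)

lemma psA_scale: "psA A n m (\<lambda>k. c * x k) = c * psA A n m x"
  by (simp add: psA_def sum_distrib_left algebra_simps)

lemma psA_diff: "psA A n m (\<lambda>k. x k - y k) = psA A n m x - psA A n m y"
  by (simp add: psA_def right_diff_distrib sum_subtractf)

lemma sn_0: "sn A 0 x = (\<Sum>n. norm (rowA A n x))" by (simp add: sn_def)
lemma sn_odd: "sn A (Suc (2*k)) x = norm (x k)" by (simp add: sn_def)
lemma sn_even: "sn A (Suc (Suc (2*n))) x = (SUP m. norm (psA A n m x))" by (simp add: sn_def)

lemma sn_cases:
  obtains "i = 0" | k where "i = Suc (2*k)" | n where "i = Suc (Suc (2*n))"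
proof -
  consider "i = 0" | "odd i" | "even i" "i \<noteq> 0" by blast
  then show thesis
  proof cases
    case 1 then show thesis using that(1) by blast
  next
    case 2
    then obtain k where "i = 2*k+1" by (rule oddE)
    then show thesis using that(2)[of k] by simp
  next
    case 3
    from 3(1) obtain m where m: "i = 2*m" by (rule evenE)
    with 3 obtain n where "m = Suc n" by (cases m) auto
    then show thesis using that(3)[of n] m by simp
  qed
qed

lemma psA_le_sn:
  assumes "x \<in> lA A" shows "norm (psA A n m x) \<le> sn A (Suc (Suc (2*n))) x"
  unfolding sn_even using psA_bdd[OF assms] by (rule cSUP_upper2) auto

lemma sn_nonneg:
  assumes "x \<in> lA A" shows "0 \<le> sn A i x"
proof (cases i rule: sn_cases)
  case 1
  then show ?thesis using assms by (simp add: sn_0 lA_iff suminf_nonneg)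
next
  case (2 k)
  then show ?thesis by (simp add: sn_odd)
next
  case (3 n)
  then show ?thesis using psA_le_sn[OF assms, of n 0] by (meson norm_ge_zero order_trans)
qed

lemma sn_add:
  assumes "x \<in> lA A" "y \<in> lA A"
  shows "sn A i (\<lambda>k. x k + y k) \<le> sn A i x + sn A i y"
proof (cases i rule: sn_cases)
  case 1
  have s: "summable (\<lambda>n. norm (rowA A n x))" "summable (\<lambda>n. norm (rowA A n y))"
    using assms by (auto simp: lA_iff)
  have s2: "summable (\<lambda>n. norm (rowA A n (\<lambda>k. x k + y k)))"
    using lA_add(1)[OF assms] by (auto simp: lA_iff)
  have "(\<Sum>n. norm (rowA A n (\<lambda>k. x k + y k))) \<le> (\<Sum>n. norm (rowA A n x) + norm (rowA A n y))"
    using s s2 by (intro suminf_le) (auto simp: lA_add(2)[OF assms] norm_triangle_ineq intro: summable_add)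
  also have "\<dots> = (\<Sum>n. norm (rowA A n x)) + (\<Sum>n. norm (rowA A n y))"
    using s by (rule suminf_add[symmetric])
  finally show ?thesis using 1 by (simp add: sn_0)
next
  case (2 k)
  then show ?thesis by (simp add: sn_odd norm_triangle_ineq)
next
  case (3 n)
  have "(SUP m. norm (psA A n m (\<lambda>k. x k + y k))) \<le> sn A i x + sn A i y"
  proof (rule cSUP_least)
    fix m
    have "norm (psA A n m (\<lambda>k. x k + y k)) \<le> norm (psA A n m x) + norm (psA A n m y)"
      by (simp add: psA_add norm_triangle_ineq)
    also have "\<dots> \<le> sn A i x + sn A i y"
      using psA_le_sn[OF assms(1), of n m] psA_le_sn[OF assms(2), of n m] 3 by simp
    finally show "norm (psA A n m (\<lambda>k. x k + y k)) \<le> sn A i x + sn A i y" .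
  qed simp
  then show ?thesis using 3 by (simp add: sn_even)
qed

lemma sn_scale:
  assumes "x \<in> lA A"
  shows "sn A i (\<lambda>k. c * x k) = norm c * sn A i x"
proof (cases i rule: sn_cases)
  case 1
  have s: "summable (\<lambda>n. norm (rowA A n x))" using assms by (auto simp: lA_iff)
  show ?thesis using 1 by (simp add: sn_0 lA_scale(2)[OF assms] norm_mult suminf_mult[OF s])
next
  case (2 k)
  then show ?thesis by (simp add: sn_odd norm_mult)
next
  case (3 n)
  have cx: "(\<lambda>k. c * x k) \<in> lA A" using lA_scale(1)[OF assms] .
  have le1: "(SUP m. norm (psA A n m (\<lambda>k. c * x k))) \<le> norm c * sn A i x"
  proof (rule cSUP_least)
    fix m show "norm (psA A n m (\<lambda>k. c * x k)) \<le> norm c * sn A i x"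
      using psA_le_sn[OF assms, of n m] 3 by (simp add: psA_scale norm_mult mult_left_mono)
  qed simp
  have le2: "norm c * sn A i x \<le> (SUP m. norm (psA A n m (\<lambda>k. c * x k)))"
  proof (cases "c = 0")
    case True
    then show ?thesis using sn_nonneg[OF cx, of i] 3 by (simp add: sn_even)
  next
    case False
    have "sn A i x \<le> (SUP m. norm (psA A n m (\<lambda>k. c * x k))) / norm c"
      unfolding 3 sn_even
    proof (rule cSUP_least)
      fix m
      have "norm c * norm (psA A n m x) \<le> (SUP m. norm (psA A n m (\<lambda>k. c * x k)))"
        using psA_le_sn[OF cx, of n m] by (simp add: sn_even psA_scale norm_mult)
      then show "norm (psA A n m x) \<le> (SUP m. norm (psA A n m (\<lambda>k. c * x k))) / norm c"
        using False by (simp add: field_simps)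
    qed simp
    then show ?thesis using False by (simp add: field_simps)
  qed
  show ?thesis using le1 le2 3 by (simp add: sn_even)
qed

lemma sn_zero: "sn A i (\<lambda>k. 0) = 0"
  using sn_scale[OF lA_zero, of A i 0] by simp

lemma sn_diff_commute:
  assumes "x \<in> lA A" "y \<in> lA A"
  shows "sn A i (\<lambda>k. x k - y k) = sn A i (\<lambda>k. y k - x k)"
proof -
  have "(\<lambda>k. y k - x k) = (\<lambda>k. (-1) * (x k - y k))" by (simp add: fun_eq_iff)
  then show ?thesis using sn_scale[OF lA_diff(1)[OF assms], of i "-1"] by simp
qed

lemma sn_triangle:
  assumes "x \<in> lA A" "y \<in> lA A" "z \<in> lA A"
  shows "sn A i (\<lambda>k. x k - z k) \<le> sn A i (\<lambda>k. x k - y k) + sn A i (\<lambda>k. y k - z k)"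
proof -
  have "(\<lambda>k. x k - z k) = (\<lambda>k. (x k - y k) + (y k - z k))" by (simp add: fun_eq_iff)
  then show ?thesis using sn_add[OF lA_diff(1)[OF assms(1,2)] lA_diff(1)[OF assms(2,3)], of i] by simp
qed

lemma sn_in_seminorms: "sn A i \<in> lA_seminorms A"
proof (cases i rule: sn_cases)
  case 1
  then have "sn A i = (\<lambda>x. \<Sum>n. norm (\<Sum>k. A n k * x k))" by (simp add: fun_eq_iff sn_0 rowA_def)
  then show ?thesis by (simp add: lA_seminorms_def)
next
  case (2 k)
  then have "sn A i = (\<lambda>x. norm (x k))" by (simp add: fun_eq_iff sn_odd)
  then show ?thesis unfolding lA_seminorms_def by blast
next
  case (3 n)
  then have "sn A i = (\<lambda>x. SUP m. norm (\<Sum>k\<le>m. A n k * x k))" by (simp add: fun_eq_iff sn_even psA_def)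
  then show ?thesis unfolding lA_seminorms_def by blast
qed

definition dA :: "(nat \<Rightarrow> nat \<Rightarrow> complex) \<Rightarrow> (nat \<Rightarrow> complex) \<Rightarrow> (nat \<Rightarrow> complex) \<Rightarrow> real" where
  "dA A x y = (if x \<in> lA A \<and> y \<in> lA A
     then (\<Sum>i. (1/2)^i * min 1 (sn A i (\<lambda>k. x k - y k))) else 0)"

lemma dA_term_bounds:
  assumes "x \<in> lA A" "y \<in> lA A"
  shows "0 \<le> (1/2::real)^i * min 1 (sn A i (\<lambda>k. x k - y k))"
    and "(1/2::real)^i * min 1 (sn A i (\<lambda>k. x k - y k)) \<le> (1/2)^i"
  using sn_nonneg[OF lA_diff(1)[OF assms], of i] by auto

lemma summable_half: "summable (\<lambda>i. (1/2::real)^i)"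
  by (rule summable_geometric) simp

lemma dA_summable:
  assumes "x \<in> lA A" "y \<in> lA A"
  shows "summable (\<lambda>i. (1/2::real)^i * min 1 (sn A i (\<lambda>k. x k - y k)))"
  by (rule summable_comparison_test'[OF summable_half, of 0])
     (use dA_term_bounds[OF assms] in auto)

lemma dA_nonneg: "0 \<le> dA A x y"
  unfolding dA_def using dA_summable dA_term_bounds by (auto intro: suminf_nonneg)

lemma dA_commute: "dA A x y = dA A y x"
  unfolding dA_def using sn_diff_commute[of x A y] by auto

lemma dA_ge:
  assumes "x \<in> lA A" "y \<in> lA A"
  shows "(1/2)^i * min 1 (sn A i (\<lambda>k. x k - y k)) \<le> dA A x y"
proof -
  have "(\<Sum>i\<in>{i}. (1/2::real)^i * min 1 (sn A i (\<lambda>k. x k - y k))) \<le> (\<Sum>i. (1/2)^i * min 1 (sn A i (\<lambda>k. x k - y k)))"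
    by (rule sum_le_suminf[OF dA_summable[OF assms]]) (use dA_term_bounds[OF assms] in auto)
  then show ?thesis using assms by (simp add: dA_def)
qed

lemma dA_sn:
  assumes "x \<in> lA A" "y \<in> lA A" "dA A x y < (1/2)^i * \<eta>" "\<eta> \<le> 1"
  shows "sn A i (\<lambda>k. x k - y k) < \<eta>"
proof -
  have "(1/2::real)^i * min 1 (sn A i (\<lambda>k. x k - y k)) < (1/2)^i * \<eta>"
    using dA_ge[OF assms(1,2), of i] assms(3) by linarith
  then have "min 1 (sn A i (\<lambda>k. x k - y k)) < \<eta>" by simp
  then show ?thesis using assms(4) by linarith
qed

lemma dA_zero:
  assumes "x \<in> lA A" "y \<in> lA A"
  shows "dA A x y = 0 \<longleftrightarrow> x = y"
proof
  assume "x = y"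
  then show "dA A x y = 0" using assms by (simp add: dA_def sn_zero)
next
  assume d0: "dA A x y = 0"
  show "x = y"
  proof
    fix k
    have "sn A (Suc (2*k)) (\<lambda>k. x k - y k) < 1/2" for dummy :: nat
      using dA_sn[OF assms, of "Suc (2*k)" "1/2"] d0 by simp
    have "\<forall>e>0. norm (x k - y k) < e"
    proof (intro allI impI)
      fix e :: real assume e: "e > 0"
      have "sn A (Suc (2*k)) (\<lambda>k. x k - y k) < min e 1"
        using dA_sn[OF assms, of "Suc (2*k)" "min e 1"] d0 e by simp
      then show "norm (x k - y k) < e" by (simp add: sn_odd)
    qed
    then show "x k = y k"
      by (metis dual_order.irrefl eq_iff_diff_eq_0 zero_less_norm_iff)
  qed
qed

lemma dA_triangle:
  assumes "x \<in> lA A" "y \<in> lA A" "z \<in> lA A"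
  shows "dA A x z \<le> dA A x y + dA A y z"
proof -
  have "(\<Sum>i. (1/2::real)^i * min 1 (sn A i (\<lambda>k. x k - z k)))
     \<le> (\<Sum>i. (1/2)^i * min 1 (sn A i (\<lambda>k. x k - y k)) + (1/2)^i * min 1 (sn A i (\<lambda>k. y k - z k)))"
  proof (rule suminf_le)
    fix i
    have t: "sn A i (\<lambda>k. x k - z k) \<le> sn A i (\<lambda>k. x k - y k) + sn A i (\<lambda>k. y k - z k)"
      by (rule sn_triangle[OF assms])
    have "0 \<le> sn A i (\<lambda>k. x k - y k)" "0 \<le> sn A i (\<lambda>k. y k - z k)"
      using sn_nonneg lA_diff(1) assms by blast+
    then have "min 1 (sn A i (\<lambda>k. x k - z k)) \<le> min 1 (sn A i (\<lambda>k. x k - y k)) + min 1 (sn A i (\<lambda>k. y k - z k))"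
      using t by linarith
    then show "(1/2::real)^i * min 1 (sn A i (\<lambda>k. x k - z k))
       \<le> (1/2)^i * min 1 (sn A i (\<lambda>k. x k - y k)) + (1/2)^i * min 1 (sn A i (\<lambda>k. y k - z k))"
      by (simp add: distrib_left[symmetric] mult_left_mono)
  qed (use dA_summable assms in \<open>auto intro: summable_add\<close>)
  also have "\<dots> = dA A x y + dA A y z"
    using assms by (simp add: dA_def suminf_add[OF dA_summable dA_summable])
  finally show ?thesis using assms by (simp add: dA_def)
qed

lemma Metric_space_dA: "Metric_space (lA A) (dA A)"
  by unfold_locales (auto simp: dA_nonneg dA_commute dA_zero dA_triangle)

lemma dA_small':
  assumes "\<delta> > 0"
  shows "\<exists>N \<eta>. \<eta> > 0 \<and> (\<forall>x\<in>lA A. \<forall>y\<in>lA A. (\<forall>i\<le>N. sn A i (\<lambda>k. x k - y k) < \<eta>) \<longrightarrow> dA A x y < \<delta>)"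
proof -
  have "(\<lambda>n. (1/2::real)^n) \<longlonglongrightarrow> 0" by (rule LIMSEQ_realpow_zero) auto
  then have "eventually (\<lambda>n. (1/2::real)^n < \<delta>/2) sequentially"
    using assms by (intro order_tendstoD(2)) auto
  then obtain N where N: "(1/2::real)^N < \<delta>/2" by (auto simp: eventually_sequentially)
  define \<eta> where "\<eta> = \<delta>/8"
  have eta: "\<eta> > 0" using assms by (simp add: \<eta>_def)
  define g where "g i = \<eta> * (1/2::real)^i + (if N < i then (1/2)^i else 0)" for i
  have tail: "(\<lambda>i. if N < i then (1/2::real)^i else 0) sums (1/2)^N"
  proof -
    have "(\<lambda>i. (1/2::real)^Suc N * (1/2)^i) sums ((1/2)^Suc N * (1 / (1 - 1/2)))"
      by (intro sums_mult geometric_sums) simp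
    then have "(\<lambda>i. (if N < i + Suc N then (1/2::real)^(i + Suc N) else 0)) sums (1/2)^N"
      by (simp add: power_add mult.commute)
    then have "(\<lambda>i. if N < i then (1/2::real)^i else 0) sums ((1/2)^N + (\<Sum>i<Suc N. (if N < i then (1/2::real)^i else 0)))"
      by (subst sums_iff_shift[symmetric]) simp
    then show ?thesis by simp
  qed
  have gs: "g sums (\<eta> * 2 + (1/2)^N)"
    unfolding g_def
    by (intro sums_add tail sums_mult) (use geometric_sums[of "1/2::real"] in simp)
  show ?thesis
  proof (intro exI[of _ N] exI[of _ \<eta>] conjI eta ballI impI)
    fix x y assume xy: "x \<in> lA A" "y \<in> lA A" and sm: "\<forall>i\<le>N. sn A i (\<lambda>k. x k - y k) < \<eta>"
    have "(\<Sum>i. (1/2::real)^i * min 1 (sn A i (\<lambda>k. x k - y k))) \<le> (\<Sum>i. g i)"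
    proof (rule suminf_le)
      fix i
      show "(1/2::real)^i * min 1 (sn A i (\<lambda>k. x k - y k)) \<le> g i"
      proof (cases "N < i")
        case True
        have "0 \<le> \<eta> * (1/2::real)^i" using eta by simp
        moreover have "g i = \<eta> * (1/2::real)^i + (1/2)^i" using True by (simp add: g_def)
        ultimately show ?thesis using dA_term_bounds(2)[OF xy, of i] by linarith
      next
        case False
        then have "sn A i (\<lambda>k. x k - y k) < \<eta>" using sm by auto
        then have "(1/2::real)^i * min 1 (sn A i (\<lambda>k. x k - y k)) \<le> (1/2)^i * \<eta>"
          by (intro mult_left_mono) auto
        then show ?thesis using False by (simp add: g_def mult.commute)
      qed
    qed (use dA_summable[OF xy] gs sums_summable in auto)
    also have "\<dots> = \<eta> * 2 + (1/2)^N" using gs sums_unique by metis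
    also have "\<dots> < \<delta>" using N assms unfolding \<eta>_def by linarith
    finally show "dA A x y < \<delta>" using xy by (simp add: dA_def)
  qed
qed

lemma psA_lim':
  assumes "summable (\<lambda>k. A n k * x k)"
  shows "(\<lambda>m. psA A n m x) \<longlonglongrightarrow> rowA A n x"
  using summable_LIMSEQ'[OF assms] unfolding psA_def rowA_def .

lemma lA_complete:
  fixes X :: "nat \<Rightarrow> nat \<Rightarrow> complex"
  assumes X: "\<And>j. X j \<in> lA A"
    and C: "\<And>i \<epsilon>. \<epsilon> > 0 \<Longrightarrow> \<exists>J. \<forall>j\<ge>J. \<forall>j'\<ge>J. sn A i (\<lambda>k. X j k - X j' k) < \<epsilon>"
  shows "\<exists>x\<in>lA A. \<forall>i \<epsilon>. \<epsilon> > 0 \<longrightarrow> (\<exists>J. \<forall>j\<ge>J. sn A i (\<lambda>k. X j k - x k) \<le> \<epsilon>)"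
proof -
  define x where "x k = lim (\<lambda>j. X j k)" for k
  have xk: "(\<lambda>j. X j k) \<longlonglongrightarrow> x k" for k
  proof -
    have "Cauchy (\<lambda>j. X j k)"
    proof (rule metric_CauchyI)
      fix e :: real assume "e > 0"
      from C[OF this, of "Suc (2*k)"] obtain J where "\<forall>j\<ge>J. \<forall>j'\<ge>J. norm (X j k - X j' k) < e"
        by (auto simp: sn_odd)
      then show "\<exists>M. \<forall>m\<ge>M. \<forall>n\<ge>M. dist (X m k) (X n k) < e" by (auto simp: dist_norm)
    qed
    then show ?thesis unfolding x_def by (simp add: Cauchy_convergent_iff convergent_LIMSEQ_iff)
  qed
  have psconv: "(\<lambda>j. psA A n m (X j)) \<longlonglongrightarrow> psA A n m x" for n m
    unfolding psA_def by (intro tendsto_sum tendsto_mult_left xk)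
  have unif: "\<exists>J. \<forall>j\<ge>J. \<forall>m. norm (psA A n m (X j) - psA A n m x) \<le> \<epsilon>" if e: "\<epsilon> > 0" for n \<epsilon>
  proof -
    from C[OF e, of "Suc (Suc (2*n))"] obtain J
      where J: "\<forall>j\<ge>J. \<forall>j'\<ge>J. sn A (Suc (Suc (2*n))) (\<lambda>k. X j k - X j' k) < \<epsilon>" by blast
    have "norm (psA A n m (X j) - psA A n m x) \<le> \<epsilon>" if j: "j \<ge> J" for j m
    proof (rule Lim_bounded)
      show "(\<lambda>j'. norm (psA A n m (X j) - psA A n m (X j'))) \<longlonglongrightarrow> norm (psA A n m (X j) - psA A n m x)"
        by (intro tendsto_norm tendsto_diff tendsto_const psconv)
      show "\<forall>j'\<ge>J. norm (psA A n m (X j) - psA A n m (X j')) \<le> \<epsilon>"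
      proof (intro allI impI)
        fix j' assume "j' \<ge> J"
        have "norm (psA A n m (X j) - psA A n m (X j')) = norm (psA A n m (\<lambda>k. X j k - X j' k))"
          by (simp add: psA_diff)
        also have "\<dots> \<le> sn A (Suc (Suc (2*n))) (\<lambda>k. X j k - X j' k)"
          by (rule psA_le_sn[OF lA_diff(1)[OF X X]])
        also have "\<dots> < \<epsilon>" using J j \<open>j' \<ge> J\<close> by blast
        finally show "norm (psA A n m (X j) - psA A n m (X j')) \<le> \<epsilon>" by simp
      qed
    qed
    then show ?thesis by blast
  qed
  have rows: "(\<lambda>m. \<Sum>k<Suc m. A n k * x k) \<longlonglongrightarrow> lim (\<lambda>m. psA A n m x)" for n
  proof -
    have "Cauchy (\<lambda>m. psA A n m x)"
    proof (rule metric_CauchyI)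
      fix e :: real assume e: "e > 0"
      then obtain J where J: "\<forall>j\<ge>J. \<forall>m. norm (psA A n m (X j) - psA A n m x) \<le> e/3"
        using unif[of "e/3" n] by auto
      have "Cauchy (\<lambda>m. psA A n m (X J))"
        using psA_lim[OF X, of n J] by (intro convergent_Cauchy convergentI)
      then have "\<exists>M. \<forall>m\<ge>M. \<forall>m'\<ge>M. dist (psA A n m (X J)) (psA A n m' (X J)) < e/3"
        using e by (intro metric_CauchyD) auto
      then obtain M where M: "\<forall>m\<ge>M. \<forall>m'\<ge>M. dist (psA A n m (X J)) (psA A n m' (X J)) < e/3"
        by blast
      show "\<exists>M. \<forall>m\<ge>M. \<forall>m'\<ge>M. dist (psA A n m x) (psA A n m' x) < e"
      proof (intro exI allI impI)
        fix m m' assume mm: "m \<ge> M" "m' \<ge> M"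
        define a where "a = psA A n m x"
        define b where "b = psA A n m (X J)"
        define c where "c = psA A n m' (X J)"
        define d where "d = psA A n m' x"
        have "norm (a - d) \<le> norm (a - b) + norm (b - c) + norm (c - d)"
          using norm_triangle_ineq[of "a-b" "b-c"] norm_triangle_ineq[of "(a-b)+(b-c)" "c-d"] by simp
        moreover have "norm (a - b) \<le> e/3" using J[rule_format, of J m] unfolding a_def b_def
          by (simp add: norm_minus_commute)
        moreover have "norm (c - d) \<le> e/3" using J[rule_format, of J m'] unfolding c_def d_def
          by simp
        moreover have "norm (b - c) < e/3" using M mm unfolding b_def c_def by (simp add: dist_norm)
        ultimately show "dist (psA A n m x) (psA A n m' x) < e" unfolding a_def d_def dist_norm by linarith
      qed
    qed
    then have "(\<lambda>m. psA A n m x) \<longlonglongrightarrow> lim (\<lambda>m. psA A n m x)"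
      by (simp add: Cauchy_convergent_iff convergent_LIMSEQ_iff)
    then show ?thesis unfolding psA_def lessThan_Suc_atMost .
  qed
  have rsum: "summable (\<lambda>k. A n k * x k)" for n
  proof -
    have "(\<lambda>m. \<Sum>k<m. A n k * x k) \<longlonglongrightarrow> lim (\<lambda>m. psA A n m x)"
      using rows[of n] by (rule LIMSEQ_imp_Suc)
    then show ?thesis unfolding summable_def sums_def by blast
  qed
  have rowunif: "\<exists>J. \<forall>j\<ge>J. norm (rowA A n (X j) - rowA A n x) \<le> \<epsilon>
        \<and> sn A (Suc (Suc (2*n))) (\<lambda>k. X j k - x k) \<le> \<epsilon>" if e: "\<epsilon> > 0" for n \<epsilon>
  proof -
    obtain J where J: "\<forall>j\<ge>J. \<forall>m. norm (psA A n m (X j) - psA A n m x) \<le> \<epsilon>"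
      using unif[OF e, of n] by blast
    have "norm (rowA A n (X j) - rowA A n x) \<le> \<epsilon> \<and> sn A (Suc (Suc (2*n))) (\<lambda>k. X j k - x k) \<le> \<epsilon>"
      if j: "j \<ge> J" for j
    proof
      show "norm (rowA A n (X j) - rowA A n x) \<le> \<epsilon>"
      proof (rule Lim_bounded)
        show "(\<lambda>m. norm (psA A n m (X j) - psA A n m x)) \<longlonglongrightarrow> norm (rowA A n (X j) - rowA A n x)"
          by (intro tendsto_norm tendsto_diff psA_lim[OF X] psA_lim'[OF rsum])
        show "\<forall>m\<ge>0. norm (psA A n m (X j) - psA A n m x) \<le> \<epsilon>" using J j by blast
      qed
      show "sn A (Suc (Suc (2*n))) (\<lambda>k. X j k - x k) \<le> \<epsilon>"
        unfolding sn_even psA_diff using J j by (intro cSUP_least) auto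
    qed
    then show ?thesis by blast
  qed
  have rowlim: "(\<lambda>j. rowA A n (X j)) \<longlonglongrightarrow> rowA A n x" for n
  proof (rule LIMSEQ_I)
    fix r :: real assume r: "r > 0"
    then obtain J where "\<forall>j\<ge>J. norm (rowA A n (X j) - rowA A n x) \<le> r/2"
      using rowunif[of "r/2" n] by auto
    then have "\<forall>j\<ge>J. norm (rowA A n (X j) - rowA A n x) < r"
    proof (intro allI impI)
      fix j assume "j \<ge> J"
      then have "norm (rowA A n (X j) - rowA A n x) \<le> r/2" using \<open>\<forall>j\<ge>J. _\<close> by blast
      then show "norm (rowA A n (X j) - rowA A n x) < r" using r by linarith
    qed
    then show "\<exists>no. \<forall>j\<ge>no. norm (rowA A n (X j) - rowA A n x) < r" by blast
  qed
  have tot: "\<exists>J. \<forall>j\<ge>J. summable (\<lambda>n. norm (rowA A n (X j) - rowA A n x))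
      \<and> (\<Sum>n. norm (rowA A n (X j) - rowA A n x)) \<le> \<epsilon>" if e: "\<epsilon> > 0" for \<epsilon>
  proof -
    from C[OF e, of 0] obtain J
      where J: "\<forall>j\<ge>J. \<forall>j'\<ge>J. sn A 0 (\<lambda>k. X j k - X j' k) < \<epsilon>" by blast
    have "summable (\<lambda>n. norm (rowA A n (X j) - rowA A n x))
      \<and> (\<Sum>n. norm (rowA A n (X j) - rowA A n x)) \<le> \<epsilon>" if j: "j \<ge> J" for j
    proof -
      have part: "(\<Sum>n<K. norm (rowA A n (X j) - rowA A n x)) \<le> \<epsilon>" for K
      proof (rule Lim_bounded)
        show "(\<lambda>j'. \<Sum>n<K. norm (rowA A n (X j) - rowA A n (X j'))) \<longlonglongrightarrow> (\<Sum>n<K. norm (rowA A n (X j) - rowA A n x))"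
          by (intro tendsto_sum tendsto_norm tendsto_diff tendsto_const rowlim)
        show "\<forall>j'\<ge>J. (\<Sum>n<K. norm (rowA A n (X j) - rowA A n (X j'))) \<le> \<epsilon>"
        proof (intro allI impI)
          fix j' assume j': "j' \<ge> J"
          have dl: "(\<lambda>k. X j k - X j' k) \<in> lA A" by (rule lA_diff(1)[OF X X])
          have "(\<Sum>n<K. norm (rowA A n (X j) - rowA A n (X j'))) = (\<Sum>n<K. norm (rowA A n (\<lambda>k. X j k - X j' k)))"
            by (simp add: lA_diff(2)[OF X X])
          also have "\<dots> \<le> (\<Sum>n. norm (rowA A n (\<lambda>k. X j k - X j' k)))"
            using dl by (intro sum_le_suminf) (auto simp: lA_iff)
          also have "\<dots> < \<epsilon>" using J j j' by (simp add: sn_0)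
          finally show "(\<Sum>n<K. norm (rowA A n (X j) - rowA A n (X j'))) \<le> \<epsilon>" by simp
        qed
      qed
      have sm: "summable (\<lambda>n. norm (rowA A n (X j) - rowA A n x))"
        by (rule summableI_nonneg_bounded[OF norm_ge_zero part])
      show ?thesis using sm suminf_le_const[OF sm part] by blast
    qed
    then show ?thesis by blast
  qed
  have xL: "x \<in> lA A"
  proof -
    from tot[of 1] obtain J where
      J: "summable (\<lambda>n. norm (rowA A n (X J) - rowA A n x))"
      by auto
    have "summable (\<lambda>n. norm (rowA A n (X J)) + norm (rowA A n (X J) - rowA A n x))"
      using X[of J] J by (intro summable_add) (auto simp: lA_iff)
    then have "summable (\<lambda>n. norm (rowA A n x))"
    proof (rule summable_comparison_test')
      fix n
      show "norm (norm (rowA A n x)) \<le> norm (rowA A n (X J)) + norm (rowA A n (X J) - rowA A n x)"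
        using norm_triangle_ineq4[of "rowA A n (X J)" "rowA A n (X J) - rowA A n x"] by simp
    qed
    then show ?thesis using rsum by (simp add: lA_iff)
  qed
  have "\<exists>J. \<forall>j\<ge>J. sn A i (\<lambda>k. X j k - x k) \<le> \<epsilon>" if e: "\<epsilon> > 0" for i \<epsilon>
  proof (cases i rule: sn_cases)
    case 1
    obtain J where J: "\<forall>j\<ge>J. summable (\<lambda>n. norm (rowA A n (X j) - rowA A n x))
      \<and> (\<Sum>n. norm (rowA A n (X j) - rowA A n x)) \<le> \<epsilon>" using tot[OF e] by blast
    show ?thesis using J 1 by (auto simp: sn_0 lA_diff(2)[OF X xL])
  next
    case (2 k)
    have "eventually (\<lambda>j. dist (X j k) (x k) < \<epsilon>) sequentially"
      using xk[of k] e by (rule tendstoD)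
    then obtain J where "\<forall>j\<ge>J. norm (X j k - x k) < \<epsilon>" by (auto simp: eventually_sequentially dist_norm)
    then show ?thesis using 2 by (auto simp: sn_odd intro!: exI[of _ J] less_imp_le)
  next
    case (3 n)
    then show ?thesis using rowunif[OF e, of n] by blast
  qed
  then show ?thesis using xL by blast
qed

definition qN :: "(nat \<Rightarrow> nat \<Rightarrow> complex) \<Rightarrow> nat \<Rightarrow> (nat \<Rightarrow> complex) \<Rightarrow> real" where
  "qN A N x = (\<Sum>i\<le>N. sn A i x)"

lemma qN_nonneg: "x \<in> lA A \<Longrightarrow> 0 \<le> qN A N x"
  unfolding qN_def by (intro sum_nonneg sn_nonneg)

lemma sn_le_qN: "x \<in> lA A \<Longrightarrow> i \<le> N \<Longrightarrow> sn A i x \<le> qN A N x"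
  unfolding qN_def by (rule member_le_sum) (auto intro: sn_nonneg)

lemma qN_mono: "x \<in> lA A \<Longrightarrow> N \<le> N' \<Longrightarrow> qN A N x \<le> qN A N' x"
  unfolding qN_def by (rule sum_mono2) (auto intro: sn_nonneg)

lemma qN_scale: "x \<in> lA A \<Longrightarrow> qN A N (\<lambda>k. c * x k) = norm c * qN A N x"
  unfolding qN_def by (simp add: sn_scale sum_distrib_left)

lemma qN_small_of_dA:
  assumes "\<eta> > 0"
  shows "\<exists>r>0. \<forall>x\<in>lA A. \<forall>y\<in>lA A. dA A x y < r \<longrightarrow> qN A N (\<lambda>k. x k - y k) < \<eta>"
proof -
  define e where "e = min 1 (\<eta> / (2 * (real N + 1)))"
  have e: "e > 0" "e \<le> 1" using assms by (auto simp: e_def)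
  have e2: "(real N + 1) * e < \<eta>"
  proof -
    have "(real N + 1) * e \<le> (real N + 1) * (\<eta> / (2 * (real N + 1)))"
      by (intro mult_left_mono) (auto simp: e_def)
    also have "\<dots> = \<eta> / 2" by (simp add: field_simps)
    finally show ?thesis using assms by linarith
  qed
  show ?thesis
  proof (intro exI[of _ "(1/2)^N * e"] conjI ballI impI)
    show "0 < (1/2::real)^N * e" using e by simp
    fix x y assume xy: "x \<in> lA A" "y \<in> lA A" and d: "dA A x y < (1/2)^N * e"
    have "sn A i (\<lambda>k. x k - y k) < e" if "i \<le> N" for i
    proof (rule dA_sn[OF xy _ e(2)])
      have "(1/2::real)^N \<le> (1/2)^i" using that by (intro power_decreasing) auto
      then have "(1/2::real)^N * e \<le> (1/2)^i * e" using e by (intro mult_right_mono) auto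
      then show "dA A x y < (1/2)^i * e" using d by linarith
    qed
    then have "qN A N (\<lambda>k. x k - y k) \<le> (\<Sum>i\<le>N. e)"
      unfolding qN_def by (intro sum_mono less_imp_le) auto
    also have "\<dots> = (real N + 1) * e" by simp
    finally show "qN A N (\<lambda>k. x k - y k) < \<eta>" using e2 by linarith
  qed
qed

lemma mcomplete_dA: "Metric_space.mcomplete (lA A) (dA A)"
proof -
  interpret M: Metric_space "lA A" "dA A" by (rule Metric_space_dA)
  show ?thesis unfolding M.mcomplete_def
  proof (intro allI impI)
    fix \<sigma> assume cau: "M.MCauchy \<sigma>"
    then have X: "\<And>j. \<sigma> j \<in> lA A" unfolding M.MCauchy_def by auto
    have C: "\<exists>J. \<forall>j\<ge>J. \<forall>j'\<ge>J. sn A i (\<lambda>k. \<sigma> j k - \<sigma> j' k) < \<epsilon>" if e: "\<epsilon> > 0" for i \<epsilon>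
    proof -
      have "(1/2::real)^i * min \<epsilon> 1 > 0" using e by simp
      then obtain J where J: "\<forall>n n'. J \<le> n \<longrightarrow> J \<le> n' \<longrightarrow> dA A (\<sigma> n) (\<sigma> n') < (1/2)^i * min \<epsilon> 1"
        using cau unfolding M.MCauchy_def by blast
      have "sn A i (\<lambda>k. \<sigma> j k - \<sigma> j' k) < min \<epsilon> 1" if "j \<ge> J" "j' \<ge> J" for j j'
        using dA_sn[OF X X, of j j' i "min \<epsilon> 1"] J that by auto
      then show ?thesis by (intro exI[of _ J]) auto
    qed
    obtain x where xL: "x \<in> lA A"
      and conv: "\<And>i \<epsilon>. \<epsilon> > 0 \<Longrightarrow> \<exists>J. \<forall>j\<ge>J. sn A i (\<lambda>k. \<sigma> j k - x k) \<le> \<epsilon>"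
      using lA_complete[of \<sigma> A, OF X C] by blast
    show "\<exists>x. limitin M.mtopology \<sigma> x sequentially"
    proof (intro exI[of _ x])
      show "limitin M.mtopology \<sigma> x sequentially"
        unfolding M.limitin_metric
      proof (intro conjI allI impI xL)
        fix \<epsilon> :: real assume e: "\<epsilon> > 0"
        obtain N \<eta> where eta: "\<eta> > 0"
          and sm: "\<forall>x\<in>lA A. \<forall>y\<in>lA A. (\<forall>i\<le>N. sn A i (\<lambda>k. x k - y k) < \<eta>) \<longrightarrow> dA A x y < \<epsilon>"
          using dA_small'[OF e, of A] by blast
        have "\<forall>i\<in>{..N}. eventually (\<lambda>j. sn A i (\<lambda>k. \<sigma> j k - x k) < \<eta>) sequentially"
        proof
          fix i
          obtain J where "\<forall>j\<ge>J. sn A i (\<lambda>k. \<sigma> j k - x k) \<le> \<eta>/2" using conv[of "\<eta>/2" i] eta by auto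
          then show "eventually (\<lambda>j. sn A i (\<lambda>k. \<sigma> j k - x k) < \<eta>) sequentially"
            unfolding eventually_sequentially using eta
            by (intro exI[of _ J]) (auto intro: le_less_trans[of _ "\<eta>/2"])
        qed
        then have "eventually (\<lambda>j. \<forall>i\<in>{..N}. sn A i (\<lambda>k. \<sigma> j k - x k) < \<eta>) sequentially"
          by (intro eventually_ball_finite) auto
        then show "eventually (\<lambda>j. \<sigma> j \<in> lA A \<and> dA A (\<sigma> j) x < \<epsilon>) sequentially"
          by eventually_elim (use X xL sm in auto)
      qed
    qed
  qed
qed

lemma BS:
  fixes h :: "nat \<Rightarrow> (nat \<Rightarrow> complex) \<Rightarrow> complex" and H :: "(nat \<Rightarrow> complex) \<Rightarrow> complex"
  assumes hdiff: "\<And>j x y. x \<in> lA A \<Longrightarrow> y \<in> lA A \<Longrightarrow> h j (\<lambda>k. x k - y k) = h j x - h j y"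
    and hscale: "\<And>j x c. x \<in> lA A \<Longrightarrow> h j (\<lambda>k. c * x k) = c * h j x"
    and bd: "\<And>j. \<exists>C N. \<forall>x\<in>lA A. norm (h j x) \<le> C * qN A N x"
    and conv: "\<And>x. x \<in> lA A \<Longrightarrow> (\<lambda>j. h j x) \<longlonglongrightarrow> H x"
  shows "\<exists>C N. \<forall>x\<in>lA A. norm (H x) \<le> C * qN A N x"
proof -
  interpret M: Metric_space "lA A" "dA A" by (rule Metric_space_dA)
  define F where "F m = {x \<in> lA A. \<forall>j. norm (h j x) \<le> real m}" for m :: nat
  have hcont: "\<exists>r>0. \<forall>x\<in>lA A. \<forall>y\<in>lA A. dA A x y < r \<longrightarrow> norm (h j x - h j y) < \<epsilon>"
    if e: "\<epsilon> > 0" for j \<epsilon>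
  proof -
    obtain C N where CN: "\<forall>x\<in>lA A. norm (h j x) \<le> C * qN A N x" using bd by blast
    define C' where "C' = \<bar>C\<bar> + 1"
    have C': "C' > 0" by (simp add: C'_def)
    have CN': "norm (h j x) \<le> C' * qN A N x" if "x \<in> lA A" for x
    proof -
      have "C * qN A N x \<le> C' * qN A N x"
        using qN_nonneg[OF that, of N] by (intro mult_right_mono) (auto simp: C'_def)
      then show ?thesis using CN that by force
    qed
    obtain r where r: "r > 0" "\<forall>x\<in>lA A. \<forall>y\<in>lA A. dA A x y < r \<longrightarrow> qN A N (\<lambda>k. x k - y k) < \<epsilon> / C'"
      using qN_small_of_dA[of "\<epsilon> / C'" A N] e C' by auto
    show ?thesis
    proof (intro exI[of _ r] conjI ballI impI r(1))
      fix x y assume xy: "x \<in> lA A" "y \<in> lA A" and d: "dA A x y < r"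
      have "norm (h j x - h j y) = norm (h j (\<lambda>k. x k - y k))" using hdiff xy by simp
      also have "\<dots> \<le> C' * qN A N (\<lambda>k. x k - y k)" by (rule CN'[OF lA_diff(1)[OF xy]])
      also have "\<dots> < C' * (\<epsilon> / C')" using r(2) xy d C' by (intro mult_strict_left_mono) auto
      also have "\<dots> = \<epsilon>" using C' by simp
      finally show "norm (h j x - h j y) < \<epsilon>" .
    qed
  qed
  have closed: "closedin M.mtopology (F m)" for m
    unfolding M.closedin_metric
  proof (intro conjI allI impI)
    show "F m \<subseteq> lA A" by (auto simp: F_def)
    fix x assume x: "x \<in> lA A - F m"
    then obtain j where j: "norm (h j x) > real m" by (auto simp: F_def not_le)
    obtain r where r: "r > 0" "\<forall>u\<in>lA A. \<forall>v\<in>lA A. dA A u v < r \<longrightarrow> norm (h j u - h j v) < norm (h j x) - real m"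
      using hcont[of "norm (h j x) - real m" j] j by auto
    show "\<exists>r>0. disjnt (F m) (M.mball x r)"
    proof (intro exI[of _ r] conjI r(1))
      show "disjnt (F m) (M.mball x r)"
        unfolding disjnt_iff
      proof (intro allI notI)
        fix y assume "y \<in> F m \<and> y \<in> M.mball x r"
        then have y: "y \<in> lA A" "norm (h j y) \<le> real m" "dA A x y < r" by (auto simp: F_def)
        have "norm (h j x - h j y) < norm (h j x) - real m" using r(2) x y by auto
        moreover have "norm (h j x) \<le> norm (h j x - h j y) + norm (h j y)"
          using norm_triangle_ineq[of "h j x - h j y" "h j y"] by simp
        ultimately show False using y(2) by linarith
      qed
    qed
  qed
  have cover: "\<Union> (range F) = lA A"
  proof
    show "\<Union> (range F) \<subseteq> lA A" by (auto simp: F_def)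
    show "lA A \<subseteq> \<Union> (range F)"
    proof
      fix x assume x: "x \<in> lA A"
      have "Bseq (\<lambda>j. h j x)" using conv[OF x] by (intro convergent_imp_Bseq convergentI)
      then obtain K where K: "\<forall>j. norm (h j x) \<le> K" by (rule BseqE)
      have "\<forall>j. norm (h j x) \<le> real (nat \<lceil>K\<rceil>)"
        using K by (meson order_trans real_nat_ceiling_ge)
      then have "x \<in> F (nat \<lceil>K\<rceil>)" using x by (simp add: F_def)
      then show "x \<in> \<Union> (range F)" by blast
    qed
  qed
  have "\<exists>m. M.mtopology interior_of F m \<noteq> {}"
  proof (rule ccontr)
    assume "\<not> (\<exists>m. M.mtopology interior_of F m \<noteq> {})"
    then have "M.mtopology interior_of \<Union> (range F) = {}"
      using closed by (intro M.metric_Baire_category_alt mcomplete_dA) auto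
    moreover have "M.mtopology interior_of \<Union> (range F) = lA A"
      unfolding cover by (metis M.topspace_mtopology interior_of_topspace)
    moreover have "(\<lambda>k. 0) \<in> lA A" by (rule lA_zero)
    ultimately show False by auto
  qed
  then obtain m x0 where "x0 \<in> M.mtopology interior_of F m" by blast
  then obtain \<epsilon> where x0: "x0 \<in> lA A" and e: "\<epsilon> > 0" and ball: "M.mball x0 \<epsilon> \<subseteq> F m"
    unfolding M.metric_interior_of by blast
  obtain N \<eta> where eta: "\<eta> > 0"
    and sm: "\<forall>x\<in>lA A. \<forall>y\<in>lA A. (\<forall>i\<le>N. sn A i (\<lambda>k. x k - y k) < \<eta>) \<longrightarrow> dA A x y < \<epsilon>"
    using dA_small'[OF e, of A] by blast
  have small: "norm (h j z) \<le> 2 * real m" if z: "z \<in> lA A" "qN A N z < \<eta>" for j z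
  proof -
    define y where "y = (\<lambda>k. z k + x0 k)"
    have yL: "y \<in> lA A" unfolding y_def by (rule lA_add(1)[OF z(1) x0])
    have yx: "(\<lambda>k. y k - x0 k) = z" by (simp add: y_def)
    have "\<forall>i\<le>N. sn A i (\<lambda>k. y k - x0 k) < \<eta>"
      using sn_le_qN[OF z(1)] z(2) unfolding yx by (meson le_less_trans)
    then have "dA A y x0 < \<epsilon>" using sm yL x0 by blast
    then have "y \<in> M.mball x0 \<epsilon>" using yL x0 by (simp add: dA_commute)
    then have "y \<in> F m" using ball by blast
    then have ny: "norm (h j y) \<le> real m" by (simp add: F_def)
    have nx: "norm (h j x0) \<le> real m" using ball x0 e by (auto simp: F_def)
    have "h j z = h j y - h j x0" using hdiff[OF yL x0, of j] unfolding yx .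
    then have "norm (h j z) \<le> norm (h j y) + norm (h j x0)" by (simp add: norm_triangle_ineq4)
    then show ?thesis using nx ny by linarith
  qed
  define K where "K = 4 * real m / \<eta>"
  have hb: "norm (h j z) \<le> K * qN A N z" if z: "z \<in> lA A" for j z
  proof (cases "qN A N z = 0")
    case True
    show ?thesis
    proof (rule ccontr)
      assume "\<not> ?thesis"
      then have pos: "norm (h j z) > 0" using True by simp
      define t where "t = (2 * real m + 1) / norm (h j z)"
      have t: "t > 0" using pos by (simp add: t_def)
      have "qN A N (\<lambda>k. complex_of_real t * z k) = 0" using qN_scale[OF z, of N] True by simp
      then have "norm (h j (\<lambda>k. complex_of_real t * z k)) \<le> 2 * real m"
        using eta by (intro small lA_scale(1)[OF z]) auto
      then have "t * norm (h j z) \<le> 2 * real m" using hscale[OF z] t by (simp add: norm_mult)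
      moreover have "t * norm (h j z) = 2 * real m + 1" using pos by (simp add: t_def)
      ultimately show False by linarith
    qed
  next
    case False
    then have qpos: "qN A N z > 0" using qN_nonneg[OF z, of N] by linarith
    define t where "t = \<eta> / (2 * qN A N z)"
    have t: "t > 0" using qpos eta by (simp add: t_def)
    have "qN A N (\<lambda>k. complex_of_real t * z k) = t * qN A N z" using qN_scale[OF z, of N] t by simp
    also have "\<dots> = \<eta> / 2" using qpos by (simp add: t_def)
    finally have "qN A N (\<lambda>k. complex_of_real t * z k) < \<eta>" using eta by linarith
    then have "norm (h j (\<lambda>k. complex_of_real t * z k)) \<le> 2 * real m"
      by (intro small lA_scale(1)[OF z])
    then have "t * norm (h j z) \<le> 2 * real m" using hscale[OF z] t by (simp add: norm_mult)
    then have "norm (h j z) \<le> 2 * real m / t" using t by (simp add: field_simps)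
    also have "\<dots> = K * qN A N z" using qpos eta by (simp add: t_def K_def field_simps)
    finally show ?thesis .
  qed
  have "norm (H z) \<le> K * qN A N z" if z: "z \<in> lA A" for z
  proof (rule Lim_bounded)
    show "(\<lambda>j. norm (h j z)) \<longlonglongrightarrow> norm (H z)" by (intro tendsto_norm conv z)
    show "\<forall>j\<ge>0. norm (h j z) \<le> K * qN A N z" using hb[OF z] by blast
  qed
  then show ?thesis by blast
qed

lemma topspace_lA_top: "topspace (lA_top A) = lA A"
proof -
  have "lA A \<subseteq> \<Union> {{x \<in> lA A. p (\<lambda>k. x k - y k) < r} | p y r. p \<in> lA_seminorms A \<and> y \<in> lA A}"
  proof
    fix x assume x: "x \<in> lA A"
    have "x \<in> {z \<in> lA A. sn A 0 (\<lambda>k. z k - x k) < 1}" using x by (simp add: sn_zero)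
    then show "x \<in> \<Union> {{x \<in> lA A. p (\<lambda>k. x k - y k) < r} | p y r. p \<in> lA_seminorms A \<and> y \<in> lA A}"
      using sn_in_seminorms[of A 0] x by blast
  qed
  then show ?thesis unfolding lA_top_def by auto
qed

lemma openin_lA_top_ball:
  assumes "x \<in> lA A"
  shows "openin (lA_top A) (\<Inter>i\<in>{..N}. {z \<in> lA A. sn A i (\<lambda>k. z k - x k) < \<eta>})"
proof -
  let ?S = "{{x \<in> lA A. p (\<lambda>k. x k - y k) < r} | p y r. p \<in> lA_seminorms A \<and> y \<in> lA A}"
  have "generate_topology_on ?S (\<Inter>i\<in>{..N}. {z \<in> lA A. sn A i (\<lambda>k. z k - x k) < \<eta>})"
  proof (rule generate_topology_on_Inter)
    fix K assume "K \<in> (\<lambda>i. {z \<in> lA A. sn A i (\<lambda>k. z k - x k) < \<eta>}) ` {..N}"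
    then obtain i where "K = {z \<in> lA A. sn A i (\<lambda>k. z k - x k) < \<eta>}" by blast
    then have "K \<in> ?S" using sn_in_seminorms[of A i] assms by blast
    then show "generate_topology_on ?S K" by (rule generate_topology_on.Basis)
  qed auto
  then have "openin (topology_generated_by ?S) (\<Inter>i\<in>{..N}. {z \<in> lA A. sn A i (\<lambda>k. z k - x k) < \<eta>})"
    by (simp add: openin_topology_generated_by_iff)
  moreover have "(\<Inter>i\<in>{..N}. {z \<in> lA A. sn A i (\<lambda>k. z k - x k) < \<eta>}) =
     (\<Inter>i\<in>{..N}. {z \<in> lA A. sn A i (\<lambda>k. z k - x k) < \<eta>}) \<inter> lA A" by auto
  ultimately show ?thesis unfolding lA_top_def openin_subtopology by blast
qed

lemma continuous_from_bound:
  fixes g :: "(nat \<Rightarrow> complex) \<Rightarrow> complex"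
  assumes gdiff: "\<And>x y. x \<in> lA A \<Longrightarrow> y \<in> lA A \<Longrightarrow> g (\<lambda>k. x k - y k) = g x - g y"
    and bd: "\<And>x. x \<in> lA A \<Longrightarrow> norm (g x) \<le> C * qN A N x"
  shows "continuous_map (lA_top A) euclidean g"
  unfolding continuous_map topspace_lA_top
proof (intro conjI allI impI)
  show "g ` lA A \<subseteq> topspace euclidean" by simp
  fix U :: "complex set" assume "openin euclidean U"
  then have U: "open U" by simp
  show "openin (lA_top A) {x \<in> lA A. g x \<in> U}"
    unfolding openin_subopen[of _ "{x \<in> lA A. g x \<in> U}"]
  proof
    fix x assume x: "x \<in> {x \<in> lA A. g x \<in> U}"
    then obtain \<epsilon> where e: "\<epsilon> > 0" and b: "ball (g x) \<epsilon> \<subseteq> U"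
      using U open_contains_ball by blast
    define C' where "C' = \<bar>C\<bar> + 1"
    have C': "C' > 0" by (simp add: C'_def)
    define \<eta> where "\<eta> = \<epsilon> / (2 * C' * (real N + 1))"
    have eta: "\<eta> > 0" using e C' by (simp add: \<eta>_def)
    define W where "W = (\<Inter>i\<in>{..N}. {z \<in> lA A. sn A i (\<lambda>k. z k - x k) < \<eta>})"
    have xL: "x \<in> lA A" using x by simp
    show "\<exists>T. openin (lA_top A) T \<and> x \<in> T \<and> T \<subseteq> {x \<in> lA A. g x \<in> U}"
    proof (intro exI[of _ W] conjI)
      show "openin (lA_top A) W" unfolding W_def by (rule openin_lA_top_ball[OF xL])
      show "x \<in> W" using xL eta by (simp add: W_def sn_zero)
      show "W \<subseteq> {x \<in> lA A. g x \<in> U}"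
      proof
        fix z assume "z \<in> W"
        then have zL: "z \<in> lA A" and zs: "\<And>i. i \<le> N \<Longrightarrow> sn A i (\<lambda>k. z k - x k) < \<eta>"
          unfolding W_def by auto
        have dL: "(\<lambda>k. z k - x k) \<in> lA A" by (rule lA_diff(1)[OF zL xL])
        have "qN A N (\<lambda>k. z k - x k) \<le> (\<Sum>i\<le>N. \<eta>)"
          unfolding qN_def
        proof (rule sum_mono)
          fix i assume "i \<in> {..N}"
          then show "sn A i (\<lambda>k. z k - x k) \<le> \<eta>" using zs[of i] by simp
        qed
        then have q: "qN A N (\<lambda>k. z k - x k) \<le> (real N + 1) * \<eta>" by (simp add: add.commute)
        have "norm (g z - g x) = norm (g (\<lambda>k. z k - x k))" using gdiff[OF zL xL] by simp
        also have "\<dots> \<le> C * qN A N (\<lambda>k. z k - x k)" by (rule bd[OF dL])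
        also have "\<dots> \<le> C' * qN A N (\<lambda>k. z k - x k)"
          using qN_nonneg[OF dL, of N] by (intro mult_right_mono) (auto simp: C'_def)
        also have "\<dots> \<le> C' * ((real N + 1) * \<eta>)" using q C' by (intro mult_left_mono) auto
        also have "\<dots> = \<epsilon> / 2" using C' by (simp add: \<eta>_def divide_simps add_pos_pos)
        finally have "dist (g x) (g z) < \<epsilon>" using e by (simp add: dist_norm norm_minus_commute)
        then show "z \<in> {x \<in> lA A. g x \<in> U}" using b zL by auto
      qed
    qed
  qed
qed

lemma row_bound_D:
  assumes LD: "lA D = lA A"
  shows "\<exists>C N. \<forall>x\<in>lA A. norm (rowA D n x) \<le> C * qN A N x"
proof (rule BS[where h="\<lambda>M x. psA D n M x"])
  fix j x y assume "x \<in> lA A" "y \<in> lA A"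
  show "psA D n j (\<lambda>k. x k - y k) = psA D n j x - psA D n j y" by (rule psA_diff)
next
  fix j x c assume "x \<in> lA A"
  show "psA D n j (\<lambda>k. c * x k) = c * psA D n j x" by (rule psA_scale)
next
  fix M
  show "\<exists>C N. \<forall>x\<in>lA A. norm (psA D n M x) \<le> C * qN A N x"
  proof (intro exI ballI)
    fix x assume x: "x \<in> lA A"
    have "norm (psA D n M x) \<le> (\<Sum>k\<le>M. norm (D n k * x k))"
      unfolding psA_def by (rule norm_sum)
    also have "\<dots> \<le> (\<Sum>k\<le>M. norm (D n k) * qN A (Suc (2*M)) x)"
    proof (rule sum_mono)
      fix k assume "k \<in> {..M}"
      then have "norm (x k) \<le> qN A (Suc (2*M)) x"
        using sn_le_qN[OF x, of "Suc (2*k)" "Suc (2*M)"] by (simp add: sn_odd)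
      then show "norm (D n k * x k) \<le> norm (D n k) * qN A (Suc (2*M)) x"
        by (simp add: norm_mult mult_left_mono)
    qed
    also have "\<dots> = (\<Sum>k\<le>M. norm (D n k)) * qN A (Suc (2*M)) x"
      by (simp add: sum_distrib_right)
    finally show "norm (psA D n M x) \<le> (\<Sum>k\<le>M. norm (D n k)) * qN A (Suc (2*M)) x" .
  qed
next
  fix x assume "x \<in> lA A"
  then show "(\<lambda>j. psA D n j x) \<longlonglongrightarrow> rowA D n x" using LD by (intro psA_lim) simp
qed

lemma g_bound:
  assumes LD: "lA D = lA A"
  shows "\<exists>C N. \<forall>x\<in>lA A. norm (\<Sum>n. rowA D n x) \<le> C * qN A N x"
proof (rule BS[where h="\<lambda>J x. \<Sum>n<J. rowA D n x"])
  fix j x y assume xy: "x \<in> lA A" "y \<in> lA A"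
  then have "x \<in> lA D" "y \<in> lA D" using LD by auto
  then show "(\<Sum>n<j. rowA D n (\<lambda>k. x k - y k)) = (\<Sum>n<j. rowA D n x) - (\<Sum>n<j. rowA D n y)"
    by (simp add: lA_diff(2) sum_subtractf)
next
  fix j x c assume "x \<in> lA A"
  then have "x \<in> lA D" using LD by auto
  then show "(\<Sum>n<j. rowA D n (\<lambda>k. c * x k)) = c * (\<Sum>n<j. rowA D n x)"
    by (simp add: lA_scale(2) sum_distrib_left)
next
  have "\<forall>n. \<exists>CN. \<forall>x\<in>lA A. norm (rowA D n x) \<le> fst CN * qN A (snd CN) x"
    using row_bound_D[OF LD] by fastforce
  then obtain CN where CN: "\<And>n x. x \<in> lA A \<Longrightarrow> norm (rowA D n x) \<le> fst (CN n) * qN A (snd (CN n)) x"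
    by metis
  fix J
  define NN where "NN = (\<Sum>n<J. snd (CN n))"
  show "\<exists>C N. \<forall>x\<in>lA A. norm (\<Sum>n<J. rowA D n x) \<le> C * qN A N x"
  proof (intro exI[of _ "\<Sum>n<J. \<bar>fst (CN n)\<bar>"] exI[of _ NN] ballI)
    fix x assume x: "x \<in> lA A"
    have "norm (\<Sum>n<J. rowA D n x) \<le> (\<Sum>n<J. norm (rowA D n x))" by (rule norm_sum)
    also have "\<dots> \<le> (\<Sum>n<J. \<bar>fst (CN n)\<bar> * qN A NN x)"
    proof (rule sum_mono)
      fix n assume n: "n \<in> {..<J}"
      have "snd (CN n) \<le> NN" unfolding NN_def using n by (intro member_le_sum) auto
      then have q: "qN A (snd (CN n)) x \<le> qN A NN x" by (rule qN_mono[OF x])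
      have "norm (rowA D n x) \<le> fst (CN n) * qN A (snd (CN n)) x" by (rule CN[OF x])
      also have "\<dots> \<le> \<bar>fst (CN n)\<bar> * qN A (snd (CN n)) x"
        using qN_nonneg[OF x] by (intro mult_right_mono) auto
      also have "\<dots> \<le> \<bar>fst (CN n)\<bar> * qN A NN x" using q by (intro mult_left_mono) auto
      finally show "norm (rowA D n x) \<le> \<bar>fst (CN n)\<bar> * qN A NN x" .
    qed
    also have "\<dots> = (\<Sum>n<J. \<bar>fst (CN n)\<bar>) * qN A NN x" by (simp add: sum_distrib_right)
    finally show "norm (\<Sum>n<J. rowA D n x) \<le> (\<Sum>n<J. \<bar>fst (CN n)\<bar>) * qN A NN x" .
  qed
next
  fix x assume "x \<in> lA A"
  then have "x \<in> lA D" using LD by auto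
  then have "summable (\<lambda>n. rowA D n x)" by (auto simp: lA_iff intro: summable_norm_cancel)
  then show "(\<lambda>J. \<Sum>n<J. rowA D n x) \<longlonglongrightarrow> (\<Sum>n. rowA D n x)" by (rule summable_LIMSEQ)
qed

lemma gauss_shift: "2 * (\<Sum>k\<in>{p+1..p+d}. k) = d * (2*p + d + 1)" for p d :: nat
proof (induction d)
  case 0
  then show ?case by simp
next
  case (Suc d)
  have "{p+1..p+Suc d} = insert (p + Suc d) {p+1..p+d}" by auto
  then have "(\<Sum>k\<in>{p+1..p+Suc d}. k) = (p + Suc d) + (\<Sum>k\<in>{p+1..p+d}. k)" by simp
  then show ?case using Suc by (simp add: algebra_simps)
qed

theorem mainTheorem1:
  fixes p q :: "nat \<Rightarrow> nat" and A :: "nat \<Rightarrow> nat \<Rightarrow> complex"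
  assumes "\<And>n. p n < q n"
    and "filterlim q at_top sequentially"
    and "\<forall>j. delta j \<in> lA A"
    and "eseq \<in> lA A"
    and "deferred_cesaro_conull p q A"
  shows "\<not> l_replaceable A"
proof
  assume "l_replaceable A"
  then obtain D where LD: "lA D = lA A" and cols: "\<And>k. (\<lambda>n. D n k) sums 1"
    unfolding l_replaceable_def by blast
  define g where "g x = (\<Sum>n. rowA D n x)" for x
  have LDx: "x \<in> lA D" if "x \<in> lA A" for x using that LD by simp
  have rs: "summable (\<lambda>n. rowA D n x)" if "x \<in> lA A" for x
    using LDx[OF that] by (auto simp: lA_iff intro: summable_norm_cancel)
  have gadd: "g (\<lambda>k. x k + y k) = g x + g y" if "x \<in> lA A" "y \<in> lA A" for x y
    unfolding g_def using lA_add(2)[OF LDx[OF that(1)] LDx[OF that(2)]] suminf_add[OF rs[OF that(1)] rs[OF that(2)]]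
    by simp
  have gdiff: "g (\<lambda>k. x k - y k) = g x - g y" if "x \<in> lA A" "y \<in> lA A" for x y
    unfolding g_def using lA_diff(2)[OF LDx[OF that(1)] LDx[OF that(2)]] suminf_diff[OF rs[OF that(1)] rs[OF that(2)]]
    by simp
  have gscale: "g (\<lambda>k. c * x k) = c * g x" if "x \<in> lA A" for x c
    unfolding g_def using lA_scale(2)[OF LDx[OF that]] suminf_mult[OF rs[OF that], of c]
    by simp
  obtain C N where bd: "\<forall>x\<in>lA A. norm (g x) \<le> C * qN A N x"
    using g_bound[OF LD] unfolding g_def by blast
  have cont: "continuous_map (lA_top A) euclidean g"
    by (rule continuous_from_bound[of A g C N]) (use gdiff bd in auto)
  have gdual: "g \<in> lA_dual A"
    unfolding lA_dual_def mem_Collect_eq using gadd gscale cont by simp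
  have gdelta: "g (delta j) = 1" for j
  proof -
    have "rowA D n (delta j) = D n j" for n
    proof -
      have "(\<lambda>k. D n k * delta j k) = (\<lambda>k. if k = j then D n k else 0)"
        by (simp add: delta_def fun_eq_iff)
      then show ?thesis unfolding rowA_def using sums_unique[OF sums_single[of j "D n"], symmetric] by simp
    qed
    then show ?thesis unfolding g_def using sums_unique[OF cols[of j], symmetric] by simp
  qed
  have conv: "(\<lambda>n. (1 / of_nat (q n - p n)) * (\<Sum>k\<in>{p n + 1..q n}. \<Sum>j<k. g (delta j))) \<longlonglongrightarrow> g eseq"
    using assms(5) gdual unfolding deferred_cesaro_conull_def by blast
  define s where "s n = (1 / of_nat (q n - p n)) * (\<Sum>k\<in>{p n + 1..q n}. \<Sum>j<k. g (delta j))" for n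
  have sbig: "real (q n) / 2 \<le> norm (s n)" for n
  proof -
    define d where "d = q n - p n"
    have d1: "q n = p n + d" using assms(1)[of n] unfolding d_def by simp
    have d2: "d > 0" using assms(1)[of n] unfolding d_def by simp
    note d = d1 d2
    have "s n = of_nat (\<Sum>k\<in>{p n + 1..q n}. k) / of_nat (q n - p n)"
      unfolding s_def by (simp add: gdelta)
    then have "s n = of_nat (\<Sum>k\<in>{p n + 1..p n + d}. k) / of_nat d"
      by (simp add: d1)
    then have "norm (s n) = real (\<Sum>k\<in>{p n + 1..p n + d}. k) / real d"
      by (simp only: norm_divide norm_of_nat)
    also have "\<dots> = real (2 * (\<Sum>k\<in>{p n + 1..p n + d}. k)) / (2 * real d)"
      by simp
    also have "\<dots> = real (d * (2 * p n + d + 1)) / (2 * real d)"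
      by (simp only: gauss_shift)
    also have "\<dots> = real (2 * p n + d + 1) / 2"
    proof -
      have dn: "real d \<noteq> 0" using d(2) by simp
      have "real (d * (2 * p n + d + 1)) = real d * real (2 * p n + d + 1)" by (rule of_nat_mult)
      then show ?thesis using dn by (simp only:) (simp add: field_simps)
    qed
    finally show ?thesis using d(1) by simp
  qed
  have "Bseq s" using conv unfolding s_def by (intro convergent_imp_Bseq convergentI)
  then obtain K where K: "\<forall>n. norm (s n) \<le> K" by (rule BseqE)
  have "eventually (\<lambda>n. q n \<ge> nat \<lceil>2 * K\<rceil> + 1) sequentially"
    using assms(2) by (simp add: filterlim_at_top)
  then obtain n where n: "q n \<ge> nat \<lceil>2 * K\<rceil> + 1" by (auto simp: eventually_sequentially)
  moreover have "real (nat \<lceil>2 * K\<rceil>) \<ge> 2 * K" by (rule real_nat_ceiling_ge)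
  ultimately have "real (q n) > 2 * K" by linarith
  moreover have "real (q n) / 2 \<le> K" using sbig[of n] K by (meson order_trans)
  ultimately show False by linarith
qed

end
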